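(* In the $\ell^2$ linear social choice setting (candidates and voters $\ell^2$-normalized), the pure stable lottery rule satisfies $\mathrm{D}(f_{\mathrm{PSLR}})=O(d)$.
   Context: Setting ($\ell^2$ linear social choice). Fix a dimension $d$. An instance consists of $n$ voters and $m$ candidates, each a vector in $\mathbb{R}^d_{\ge 0}$ with Euclidean norm $1$, with every voter vector in $\mathrm{Cone}(C)$ (nonnegative linear combinations of the candidate vectors $C$). Utility $u_v(c)=v^\top c$; voters report consistent rankings (ties arbitrary); $\mathrm{UW}(c)=\sum_v u_v(c)$. A randomized rule outputs a distribution over $C$ based only on the profile. Distortion on an instance: $\max_c\mathrm{UW}(c)/\mathbb{E}_{c\sim f}[\mathrm{UW}(c)]$; $\mathrm{D}(f)$ is the supremum over instances, as a function of $d$. Stable lottery: for a committee $W\subseteq C$ and $c\in C$, $S_c(W)$ is the set of voters ranking $c$ above every member of $W$; a distribution $\mathcal W$ over committees of size $k$ is a stable lottery if $\mathbb{E}_{W\sim\mathcal W}[|S_c(W)|]\le n/k$ for all $c\in C$ (such lotteries exist for every profile). $f_{\mathrm{PSLR}}$: given a stable lottery $\mathcal W$ over committees of size $2d$, choose each $c\in C$ with probability $\frac1{2d}\Pr_{W\sim\mathcal W}[c\in W]$. *)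

theory Defs
  imports "HOL-Probability.Probability"
begin

text \<open>Vectors in R^d are represented as functions nat => real; only coordinates i < d matter.
  Voters are indexed by {..<n}, candidates by {..<m}.\<close>

definition ip :: "nat \<Rightarrow> (nat \<Rightarrow> real) \<Rightarrow> (nat \<Rightarrow> real) \<Rightarrow> real" where
  "ip d x y = (\<Sum>i<d. x i * y i)"

definition unit_nonneg :: "nat \<Rightarrow> (nat \<Rightarrow> real) \<Rightarrow> bool" where
  "unit_nonneg d x \<longleftrightarrow> (\<forall>i<d. 0 \<le> x i) \<and> (\<Sum>i<d. (x i)\<^sup>2) = 1"

definition in_cone :: "nat \<Rightarrow> nat \<Rightarrow> (nat \<Rightarrow> nat \<Rightarrow> real) \<Rightarrow> (nat \<Rightarrow> real) \<Rightarrow> bool" where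
  "in_cone d m cand x \<longleftrightarrow>
     (\<exists>lam::nat \<Rightarrow> real. (\<forall>j<m. 0 \<le> lam j) \<and> (\<forall>i<d. x i = (\<Sum>j<m. lam j * cand j i)))"

definition l2_instance :: "nat \<Rightarrow> nat \<Rightarrow> nat \<Rightarrow> (nat \<Rightarrow> nat \<Rightarrow> real) \<Rightarrow> (nat \<Rightarrow> nat \<Rightarrow> real) \<Rightarrow> bool" where
  "l2_instance d n m vot cand \<longleftrightarrow>
     (\<forall>j<m. unit_nonneg d (cand j)) \<and>
     (\<forall>v<n. unit_nonneg d (vot v) \<and> in_cone d m cand (vot v))"

definition util :: "nat \<Rightarrow> (nat \<Rightarrow> nat \<Rightarrow> real) \<Rightarrow> (nat \<Rightarrow> nat \<Rightarrow> real) \<Rightarrow> nat \<Rightarrow> nat \<Rightarrow> real" where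
  "util d vot cand v c = ip d (vot v) (cand c)"

definition UW :: "nat \<Rightarrow> nat \<Rightarrow> (nat \<Rightarrow> nat \<Rightarrow> real) \<Rightarrow> (nat \<Rightarrow> nat \<Rightarrow> real) \<Rightarrow> nat \<Rightarrow> real" where
  "UW d n vot cand c = (\<Sum>v<n. util d vot cand v c)"

text \<open>A profile: pref v a b means voter v ranks candidate a strictly above candidate b.\<close>
definition consistent_profile ::
  "nat \<Rightarrow> nat \<Rightarrow> nat \<Rightarrow> (nat \<Rightarrow> nat \<Rightarrow> real) \<Rightarrow> (nat \<Rightarrow> nat \<Rightarrow> real) \<Rightarrow> (nat \<Rightarrow> nat \<Rightarrow> nat \<Rightarrow> bool) \<Rightarrow> bool" where
  "consistent_profile d n m vot cand pref \<longleftrightarrow>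
     (\<forall>v<n.
        (\<forall>a<m. \<not> pref v a a) \<and>
        (\<forall>a<m. \<forall>b<m. \<forall>c<m. pref v a b \<longrightarrow> pref v b c \<longrightarrow> pref v a c) \<and>
        (\<forall>a<m. \<forall>b<m. a \<noteq> b \<longrightarrow> pref v a b \<or> pref v b a) \<and>
        (\<forall>a<m. \<forall>b<m. util d vot cand v a > util d vot cand v b \<longrightarrow> pref v a b))"

definition S_set :: "nat \<Rightarrow> (nat \<Rightarrow> nat \<Rightarrow> nat \<Rightarrow> bool) \<Rightarrow> nat \<Rightarrow> nat set \<Rightarrow> nat set" where
  "S_set n pref c W = {v. v < n \<and> (\<forall>w\<in>W. pref v c w)}"

definition stable_lottery ::
  "nat \<Rightarrow> nat \<Rightarrow> (nat \<Rightarrow> nat \<Rightarrow> nat \<Rightarrow> bool) \<Rightarrow> nat \<Rightarrow> nat set pmf \<Rightarrow> bool" where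
  "stable_lottery n m pref k L \<longleftrightarrow>
     (\<forall>W\<in>set_pmf L. W \<subseteq> {..<m} \<and> card W = k) \<and>
     (\<forall>c<m. measure_pmf.expectation L (\<lambda>W. real (card (S_set n pref c W))) \<le> real n / real k)"

definition pslr_prob :: "nat \<Rightarrow> nat set pmf \<Rightarrow> nat \<Rightarrow> real" where
  "pslr_prob d L c = measure_pmf.prob L {W. c \<in> W} / (2 * real d)"

definition pslr_welfare ::
  "nat \<Rightarrow> nat \<Rightarrow> nat \<Rightarrow> (nat \<Rightarrow> nat \<Rightarrow> real) \<Rightarrow> (nat \<Rightarrow> nat \<Rightarrow> real) \<Rightarrow> nat set pmf \<Rightarrow> real" where
  "pslr_welfare d n m vot cand L = (\<Sum>c<m. pslr_prob d L c * UW d n vot cand c)"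

end

theory Submission
  imports Defs
begin

lemma ip_le1:
  assumes "unit_nonneg d x" "unit_nonneg d y"
  shows "ip d x y \<le> 1"
proof -
  have "ip d x y \<le> (\<Sum>i<d. ((x i)\<^sup>2 + (y i)\<^sup>2) / 2)"
    unfolding ip_def
  proof (rule sum_mono)
    fix i show "x i * y i \<le> ((x i)\<^sup>2 + (y i)\<^sup>2) / 2"
      using sum_squares_ge_zero[of "x i - y i" 0] by (simp add: power2_eq_square algebra_simps)
  qed
  also have "\<dots> = ((\<Sum>i<d. (x i)\<^sup>2) + (\<Sum>i<d. (y i)\<^sup>2)) / 2"
    by (simp add: sum.distrib flip: sum_divide_distrib)
  also have "\<dots> = 1" using assms unfolding unit_nonneg_def by simp
  finally show ?thesis .
qed

lemma ip_ge0:
  assumes "unit_nonneg d x" "unit_nonneg d y"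
  shows "0 \<le> ip d x y"
  using assms unfolding ip_def unit_nonneg_def by (auto intro!: sum_nonneg)

lemma util_bounds:
  assumes "l2_instance d n m vot cand" "v < n" "c < m"
  shows "0 \<le> util d vot cand v c" "util d vot cand v c \<le> 1"
  using assms ip_le1 ip_ge0 unfolding l2_instance_def util_def by blast+

lemma l1_ge:
  assumes "unit_nonneg d x"
  shows "1 \<le> (\<Sum>i<d. x i)"
proof -
  have "\<And>i. i < d \<Longrightarrow> (x i)\<^sup>2 \<le> x i"
  proof -
    fix i assume i: "i < d"
    have "(x i)\<^sup>2 \<le> (\<Sum>j<d. (x j)\<^sup>2)"
      by (rule member_le_sum) (use i in auto)
    then have "(x i)\<^sup>2 \<le> 1" using assms unfolding unit_nonneg_def by simp
    then have "x i \<le> 1" using assms i unfolding unit_nonneg_def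
      by (metis abs_le_square_iff abs_of_nonneg one_power2 abs_one)
    then show "(x i)\<^sup>2 \<le> x i" using assms i unfolding unit_nonneg_def
      by (simp add: power2_eq_square mult_left_le)
  qed
  then have "(\<Sum>i<d. (x i)\<^sup>2) \<le> (\<Sum>i<d. x i)" by (intro sum_mono) auto
  then show ?thesis using assms unfolding unit_nonneg_def by simp
qed


lemma pointwise:
  assumes inst: "l2_instance d n m vot cand"
    and prof: "consistent_profile d n m vot cand pref"
    and W: "W \<subseteq> {..<m}" and c: "c < m"
  shows "UW d n vot cand c \<le> (\<Sum>c'<m. indicator {W. c' \<in> W} W * UW d n vot cand c')
           + real (card (S_set n pref c W))"
proof -
  let ?S = "S_set n pref c W"
  let ?u = "util d vot cand"
  have finW: "finite W" using W finite_subset by blast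
  have per: "?u v c \<le> (\<Sum>w\<in>W. ?u v w) + (if v \<in> ?S then 1 else 0)" if v: "v < n" for v
  proof (cases "v \<in> ?S")
    case True
    have "0 \<le> (\<Sum>w\<in>W. ?u v w)" using W util_bounds(1)[OF inst v] by (intro sum_nonneg) auto
    then show ?thesis using True util_bounds(2)[OF inst v c] by simp
  next
    case False
    then obtain w where w: "w \<in> W" "\<not> pref v c w" using v unfolding S_set_def by auto
    have wm: "w < m" using w W by auto
    have "?u v c \<le> ?u v w"
    proof (cases "w = c")
      case True then show ?thesis by simp
    next
      case False
      have P: "\<forall>a<m. \<not> pref v a a" "\<forall>a<m. \<forall>b<m. \<forall>c<m. pref v a b \<longrightarrow> pref v b c \<longrightarrow> pref v a c"
        "\<forall>a<m. \<forall>b<m. a \<noteq> b \<longrightarrow> pref v a b \<or> pref v b a"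
        "\<forall>a<m. \<forall>b<m. ?u v a > ?u v b \<longrightarrow> pref v a b"
        using prof v unfolding consistent_profile_def by blast+
      show ?thesis
      proof (rule ccontr)
        assume "\<not> ?u v c \<le> ?u v w"
        then have "pref v c w" using P(4) c wm by auto
        then show False using w(2) by blast
      qed
    qed
    also have "\<dots> \<le> (\<Sum>w\<in>W. ?u v w)"
      using finW w W util_bounds(1)[OF inst v] by (intro member_le_sum) auto
    finally show ?thesis using False by simp
  qed
  have "UW d n vot cand c = (\<Sum>v<n. ?u v c)" unfolding UW_def by simp
  also have "\<dots> \<le> (\<Sum>v<n. (\<Sum>w\<in>W. ?u v w) + (if v \<in> ?S then 1 else 0))"
    using per by (intro sum_mono) auto
  also have "\<dots> = (\<Sum>w\<in>W. UW d n vot cand w) + (\<Sum>v<n. (if v \<in> ?S then 1 else 0))"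
    unfolding UW_def by (simp add: sum.distrib sum.swap[of _ W])
  also have "(\<Sum>v<n. (if v \<in> ?S then 1 else 0)) = (\<Sum>v\<in>{..<n} \<inter> ?S. (1::real))"
    by (rule sum.inter_restrict[symmetric]) simp
  also have "{..<n} \<inter> ?S = ?S" unfolding S_set_def by auto
  also have "(\<Sum>w\<in>W. UW d n vot cand w) = (\<Sum>w\<in>{..<m} \<inter> W. UW d n vot cand w)"
    using W by (simp add: Int_absorb1)
  also have "\<dots> = (\<Sum>c'<m. indicator {W. c' \<in> W} W * UW d n vot cand c')"
    by (simp add: sum.inter_restrict indicator_def)
  finally show ?thesis by simp
qed


lemma welfare_lower:
  assumes inst: "l2_instance d n m vot cand" and m: "0 < m"
    and M: "\<And>c. c < m \<Longrightarrow> UW d n vot cand c \<le> M"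
  shows "real n \<le> real d * M"
proof -
  have "\<forall>v. \<exists>l. v < n \<longrightarrow> (\<forall>j<m. 0 \<le> l j) \<and> (\<forall>i<d. vot v i = (\<Sum>j<m. l j * cand j i))"
    using inst unfolding l2_instance_def in_cone_def by blast
  then obtain lam where lam: "\<And>v. v < n \<Longrightarrow> (\<forall>j<m. 0 \<le> lam v j) \<and> (\<forall>i<d. vot v i = (\<Sum>j<m. lam v j * cand j i))"
    by metis
  define s where "s i = (\<Sum>v<n. vot v i)" for i
  define T where "T = (\<Sum>i<d. s i)"
  have UWs: "UW d n vot cand c = (\<Sum>i<d. cand c i * s i)" for c
    unfolding UW_def util_def ip_def s_def by (simp add: sum.swap[of _ "{..<d}"] sum_distrib_left mult.commute)
  have M0: "0 \<le> M"
  proof -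
    have "0 \<le> UW d n vot cand 0" unfolding UW_def using util_bounds(1)[OF inst _ m] by (intro sum_nonneg) auto
    then show ?thesis using M[OF m] by simp
  qed
  have Tn: "real n \<le> T"
  proof -
    have "real n = (\<Sum>v<n. (1::real))" by simp
    also have "\<dots> \<le> (\<Sum>v<n. \<Sum>i<d. vot v i)"
      using inst l1_ge unfolding l2_instance_def by (intro sum_mono) auto
    also have "\<dots> = T" unfolding T_def s_def by (rule sum.swap)
    finally show ?thesis .
  qed
  have "(\<Sum>i<d. (s i)\<^sup>2) = (\<Sum>v<n. \<Sum>i<d. vot v i * s i)"
    unfolding s_def by (simp add: power2_eq_square sum_distrib_right sum.swap[of _ "{..<d}"])
  also have "\<dots> = (\<Sum>v<n. \<Sum>i<d. (\<Sum>j<m. lam v j * cand j i) * s i)"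
    using lam by (intro sum.cong) auto
  also have "\<dots> = (\<Sum>v<n. \<Sum>j<m. lam v j * UW d n vot cand j)"
    unfolding UWs by (simp add: sum_distrib_right sum_distrib_left sum.swap[of _ "{..<d}"] mult.assoc)
  also have "\<dots> \<le> (\<Sum>v<n. \<Sum>j<m. lam v j * M)"
    using lam M by (intro sum_mono mult_left_mono) auto
  also have "\<dots> \<le> (\<Sum>v<n. \<Sum>j<m. lam v j * (\<Sum>i<d. cand j i) * M)"
  proof (intro sum_mono)
    fix v j assume v: "v \<in> {..<n}" and j: "j \<in> {..<m}"
    have "1 \<le> (\<Sum>i<d. cand j i)" using inst j l1_ge unfolding l2_instance_def by auto
    then have "lam v j * 1 \<le> lam v j * (\<Sum>i<d. cand j i)" using lam v j by (intro mult_left_mono) auto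
    then show "lam v j * M \<le> lam v j * (\<Sum>i<d. cand j i) * M" using M0 by (intro mult_right_mono) auto
  qed
  also have "\<dots> = M * (\<Sum>v<n. \<Sum>i<d. \<Sum>j<m. lam v j * cand j i)"
    by (simp add: sum_distrib_left sum_distrib_right sum.swap[of _ "{..<d}"] mult_ac)
  also have "\<dots> = M * T"
    unfolding T_def s_def using lam by (simp add: sum.swap[of _ "{..<d}"])
  finally have A: "(\<Sum>i<d. (s i)\<^sup>2) \<le> M * T" .
  have "T\<^sup>2 \<le> (\<Sum>i<d. (s i)\<^sup>2) * real d"
    unfolding T_def using sum_squared_le_sum_of_squares[of s "{..<d}"] by simp
  also have "\<dots> \<le> M * T * real d" using A by (intro mult_right_mono) auto
  finally have B: "T * T \<le> (real d * M) * T" by (simp add: power2_eq_square mult_ac)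
  show ?thesis
  proof (cases "T > 0")
    case True
    then have "T \<le> real d * M" using B by simp
    then show ?thesis using Tn by simp
  next
    case False
    have "0 \<le> real d * M" using M0 by simp
    then show ?thesis using Tn False by linarith
  qed
qed


lemma expect_bound:
  assumes inst: "l2_instance d n m vot cand"
    and prof: "consistent_profile d n m vot cand pref"
    and st: "stable_lottery n m pref (2 * d) L" and d: "d \<ge> 1" and c: "c < m"
  shows "UW d n vot cand c \<le> 2 * real d * pslr_welfare d n m vot cand L + real n / (2 * real d)"
proof -
  have sub: "set_pmf L \<subseteq> Pow {..<m}" using st unfolding stable_lottery_def by auto
  have fin: "finite (set_pmf L)" by (rule finite_subset[OF sub]) simp
  have int: "integrable (measure_pmf L) f" for f :: "nat set \<Rightarrow> real"
    by (rule integrable_measure_pmf_finite[OF fin])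
  let ?f = "\<lambda>W. (\<Sum>c'<m. indicator {W. c' \<in> W} W * UW d n vot cand c') + real (card (S_set n pref c W))"
  have "UW d n vot cand c = measure_pmf.expectation L (\<lambda>_. UW d n vot cand c)" by simp
  also have "\<dots> \<le> measure_pmf.expectation L ?f"
  proof (rule integral_mono_AE[OF int int])
    show "AE W in measure_pmf L. UW d n vot cand c \<le> ?f W"
      by (rule AE_pmfI) (use pointwise[OF inst prof _ c] sub in auto)
  qed
  also have "\<dots> = (\<Sum>c'<m. measure_pmf.expectation L (\<lambda>W. indicator {W. c' \<in> W} W * UW d n vot cand c'))
        + measure_pmf.expectation L (\<lambda>W. real (card (S_set n pref c W)))"
    by (simp only: Bochner_Integration.integral_add[OF int int] Bochner_Integration.integral_sum[OF int])
  also have "(\<Sum>c'<m. measure_pmf.expectation L (\<lambda>W. indicator {W. c' \<in> W} W * UW d n vot cand c'))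
      = (\<Sum>c'<m. measure_pmf.prob L {W. c' \<in> W} * UW d n vot cand c')"
    by (intro sum.cong refl) (simp add: Bochner_Integration.integral_indicator Collect_mem_eq)
  also have "\<dots> = 2 * real d * pslr_welfare d n m vot cand L"
    unfolding pslr_welfare_def pslr_prob_def using d by (simp add: sum_distrib_left)
  also have "measure_pmf.expectation L (\<lambda>W. real (card (S_set n pref c W))) \<le> real n / real (2 * d)"
    using st c unfolding stable_lottery_def by blast
  finally show ?thesis by simp
qed


theorem theorem18:
  shows "\<exists>K::real. K > 0 \<and>
    (\<forall>d n m vot cand pref L.
       d \<ge> 1 \<longrightarrow>
       l2_instance d n m vot cand \<longrightarrow>
       consistent_profile d n m vot cand pref \<longrightarrow>
       stable_lottery n m pref (2 * d) L \<longrightarrow>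
       (\<forall>c<m. UW d n vot cand c \<le> K * real d * pslr_welfare d n m vot cand L))"
proof (intro exI[of _ 4] conjI allI impI)
  fix d n m vot cand pref L c
  assume d: "(1::nat) \<le> d" and inst: "l2_instance d n m vot cand"
    and prof: "consistent_profile d n m vot cand pref"
    and st: "stable_lottery n m pref (2 * d) L" and c: "c < m"
  define M where "M = Max (UW d n vot cand ` {..<m})"
  have ne: "UW d n vot cand ` {..<m} \<noteq> {}" using c by auto
  obtain cs where cs: "cs < m" "UW d n vot cand cs = M"
    using Max_in[OF _ ne] unfolding M_def by auto
  have Mge: "UW d n vot cand c' \<le> M" if "c' < m" for c'
    unfolding M_def using that by (intro Max_ge) auto
  have nM: "real n \<le> real d * M" by (rule welfare_lower[OF inst _ Mge]) (use c in auto)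
  have dpos: "0 < real d" using d by simp
  have "real n / (2 * real d) \<le> M / 2"
    using nM dpos by (simp add: field_simps)
  then have "M \<le> 2 * real d * pslr_welfare d n m vot cand L + M / 2"
    using expect_bound[OF inst prof st d cs(1)] cs(2) by linarith
  then have "M \<le> 4 * real d * pslr_welfare d n m vot cand L" by linarith
  then show "UW d n vot cand c \<le> 4 * real d * pslr_welfare d n m vot cand L"
    using Mge[OF c] by linarith
qed simp

end
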